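(* Let $E$ and $F$ be Banach lattices and consider the Banach lattice direct sum $E \oplus F$ (ordered coordinatewise), with canonical projections $\pi_E: E \oplus F \to E$ and $\pi_F: E \oplus F \to F$. (1) For nonempty sets $A \subset E$ and $B \subset F$, both $A$ is almost Grothendieck in $E$ and $B$ is almost Grothendieck in $F$ if and only if $A \times B$ is almost Grothendieck in $E \oplus F$. (2) If $C \subset E \oplus F$ is almost Grothendieck, then $\pi_E(C)$ and $\pi_F(C)$ are almost Grothendieck in $E$ and $F$, respectively.
   Context: For a Banach lattice $G$, every bounded linear operator $T: G \to c_0$ has the form $T(x) = (x_n'(x))_n$ for a unique weak* null sequence $(x_n') \subset G'$; $T$ is a disjoint operator if $(x_n')$ is disjoint in the dual Banach lattice $G'$. A subset $A \subset G$ is almost Grothendieck if $T(A)$ is relatively weakly compact in $c_0$ for every disjoint operator $T: G \to c_0$. *)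

theory Defs
  imports "HOL-Analysis.Analysis"
begin

definition is_lub_of :: "('a \<Rightarrow> 'a \<Rightarrow> bool) \<Rightarrow> 'a \<Rightarrow> 'a \<Rightarrow> 'a \<Rightarrow> bool" where
  "is_lub_of le x y s \<longleftrightarrow> le x s \<and> le y s \<and> (\<forall>u. le x u \<and> le y u \<longrightarrow> le s u)"

definition banach_lattice :: "('a::banach \<Rightarrow> 'a \<Rightarrow> bool) \<Rightarrow> bool" where
  "banach_lattice le \<longleftrightarrow>
     (\<forall>x. le x x) \<and>
     (\<forall>x y z. le x y \<longrightarrow> le y z \<longrightarrow> le x z) \<and>
     (\<forall>x y. le x y \<longrightarrow> le y x \<longrightarrow> x = y) \<and>
     (\<forall>x y z. le x y \<longrightarrow> le (x + z) (y + z)) \<and>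
     (\<forall>x c. le 0 x \<longrightarrow> 0 \<le> c \<longrightarrow> le 0 (c *\<^sub>R x)) \<and>
     (\<forall>x y. \<exists>s. is_lub_of le x y s) \<and>
     (\<forall>x y a b. is_lub_of le x (- x) a \<longrightarrow> is_lub_of le y (- y) b \<longrightarrow> le a b
                 \<longrightarrow> norm x \<le> norm y)"

text \<open>Coordinatewise order on the direct sum E (+) F (carrier type 'a \<times> 'b with the
  product Banach space structure of HOL-Analysis).\<close>
definition sum_le :: "('a \<Rightarrow> 'a \<Rightarrow> bool) \<Rightarrow> ('b \<Rightarrow> 'b \<Rightarrow> bool) \<Rightarrow> 'a \<times> 'b \<Rightarrow> 'a \<times> 'b \<Rightarrow> bool" where
  "sum_le leE leF p q \<longleftrightarrow> leE (fst p) (fst q) \<and> leF (snd p) (snd q)"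

definition dual_le :: "('a::real_normed_vector \<Rightarrow> 'a \<Rightarrow> bool) \<Rightarrow> ('a \<Rightarrow> real) \<Rightarrow> ('a \<Rightarrow> real) \<Rightarrow> bool" where
  "dual_le le f g \<longleftrightarrow> (\<forall>x. le 0 x \<longrightarrow> f x \<le> g x)"

definition is_dual_abs :: "('a::real_normed_vector \<Rightarrow> 'a \<Rightarrow> bool) \<Rightarrow> ('a \<Rightarrow> real) \<Rightarrow> ('a \<Rightarrow> real) \<Rightarrow> bool" where
  "is_dual_abs le f a \<longleftrightarrow> bounded_linear a \<and> dual_le le f a \<and> dual_le le (\<lambda>x. - f x) a \<and>
     (\<forall>h. bounded_linear h \<and> dual_le le f h \<and> dual_le le (\<lambda>x. - f x) h \<longrightarrow> dual_le le a h)"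

text \<open>f and g are disjoint in G': |f| \<and> |g| = 0, i.e. 0 is the greatest lower bound of |f|, |g|
  (note 0 is always a lower bound of both).\<close>
definition dual_disjoint :: "('a::real_normed_vector \<Rightarrow> 'a \<Rightarrow> bool) \<Rightarrow> ('a \<Rightarrow> real) \<Rightarrow> ('a \<Rightarrow> real) \<Rightarrow> bool" where
  "dual_disjoint le f g \<longleftrightarrow> (\<exists>a b. is_dual_abs le f a \<and> is_dual_abs le g b \<and>
     (\<forall>h. bounded_linear h \<and> dual_le le h a \<and> dual_le le h b \<longrightarrow> dual_le le h (\<lambda>x. 0)))"

definition c0 :: "(nat \<Rightarrow> real) set" where
  "c0 = {x. x \<longlonglongrightarrow> 0}"

definition c0_norm :: "(nat \<Rightarrow> real) \<Rightarrow> real" where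
  "c0_norm x = (SUP n. \<bar>x n\<bar>)"

definition c0_dual :: "((nat \<Rightarrow> real) \<Rightarrow> real) set" where
  "c0_dual = {\<phi>. (\<forall>x\<in>c0. \<forall>y\<in>c0. \<phi> (\<lambda>n. x n + y n) = \<phi> x + \<phi> y) \<and>
                  (\<forall>x\<in>c0. \<forall>c. \<phi> (\<lambda>n. c * x n) = c * \<phi> x) \<and>
                  (\<exists>K. \<forall>x\<in>c0. \<bar>\<phi> x\<bar> \<le> K * c0_norm x)}"

definition c0_weak :: "(nat \<Rightarrow> real) topology" where
  "c0_weak = topology_generated_by {{x\<in>c0. \<phi> x \<in> U} | \<phi> U. \<phi> \<in> c0_dual \<and> open U}"

text \<open>Relatively weakly compact subset of c_0 (weak topology is Hausdorff, so this is
  equivalent to having weakly compact weak closure).\<close>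
definition rel_weakly_compact_c0 :: "(nat \<Rightarrow> real) set \<Rightarrow> bool" where
  "rel_weakly_compact_c0 S \<longleftrightarrow> (\<exists>K. S \<subseteq> K \<and> compactin c0_weak K)"

text \<open>Disjoint operators G \<rightarrow> c_0 are exactly x \<mapsto> (f n x)_n with (f n) a weak* null sequence
  in G' that is (pairwise) disjoint in G'.\<close>
definition almost_grothendieck :: "('a::banach \<Rightarrow> 'a \<Rightarrow> bool) \<Rightarrow> 'a set \<Rightarrow> bool" where
  "almost_grothendieck le A \<longleftrightarrow>
     (\<forall>f :: nat \<Rightarrow> 'a \<Rightarrow> real.
        (\<forall>n. bounded_linear (f n)) \<and> (\<forall>x. (\<lambda>n. f n x) \<longlonglongrightarrow> 0) \<and>
        (\<forall>m n. m \<noteq> n \<longrightarrow> dual_disjoint le (f m) (f n))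
        \<longrightarrow> rel_weakly_compact_c0 ((\<lambda>x n. f n x) ` A))"

end

theory Submission imports Defs begin

lemma bl_split:
  assumes "bounded_linear g"
  shows "g (x, y) = g (x, 0) + g (0, y)"
proof -
  have "(x, y) = (x, 0) + (0, y)" by simp
  then show ?thesis by (metis assms bounded_linear.linear linear_add)
qed

lemma bl_zero: "bounded_linear g \<Longrightarrow> g 0 = 0"
  by (metis bounded_linear.linear linear_0)

lemma bl_inl: "bounded_linear g \<Longrightarrow> bounded_linear (\<lambda>x. g (x, 0))"
  using bounded_linear_compose[of g "\<lambda>x. (x,0)"] bounded_linear_Pair[OF bounded_linear_ident bounded_linear_zero]
  by simp

lemma bl_inr: "bounded_linear g \<Longrightarrow> bounded_linear (\<lambda>y. g (0, y))"
  using bounded_linear_compose[of g "\<lambda>y. (0,y)"] bounded_linear_Pair[OF bounded_linear_zero bounded_linear_ident]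
  by simp

lemma bl_fst: "bounded_linear g \<Longrightarrow> bounded_linear (\<lambda>p. g (fst p))"
  using bounded_linear_compose[OF _ bounded_linear_fst] by blast

lemma bl_snd: "bounded_linear g \<Longrightarrow> bounded_linear (\<lambda>p. g (snd p))"
  using bounded_linear_compose[OF _ bounded_linear_snd] by blast

lemma pos_pair: "sum_le leE leF 0 (x, y) \<longleftrightarrow> leE 0 x \<and> leF 0 y"
  by (simp add: sum_le_def)

lemma lift_abs_fst:
  assumes f: "bounded_linear f" and a: "is_dual_abs leE f a" and rE: "leE 0 0" and rF: "leF 0 0"
  shows "is_dual_abs (sum_le leE leF) (\<lambda>p. f (fst p)) (\<lambda>p. a (fst p))"
  unfolding is_dual_abs_def
proof (intro conjI allI impI)
  show "bounded_linear (\<lambda>p. a (fst p))" using a bl_fst unfolding is_dual_abs_def by blast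
  show "dual_le (sum_le leE leF) (\<lambda>p. f (fst p)) (\<lambda>p. a (fst p))"
    using a unfolding is_dual_abs_def dual_le_def sum_le_def by auto
  show "dual_le (sum_le leE leF) (\<lambda>x. - f (fst x)) (\<lambda>p. a (fst p))"
    using a unfolding is_dual_abs_def dual_le_def sum_le_def by auto
  fix h :: "_ \<Rightarrow> real"
  assume h: "bounded_linear h \<and> dual_le (sum_le leE leF) (\<lambda>p. f (fst p)) h \<and>
        dual_le (sum_le leE leF) (\<lambda>x. - f (fst x)) h"
  have "dual_le leE a (\<lambda>x. h (x, 0))"
  proof -
    have "bounded_linear (\<lambda>x. h (x, 0))" using h bl_inl by blast
    moreover have "dual_le leE f (\<lambda>x. h (x, 0))" "dual_le leE (\<lambda>x. - f x) (\<lambda>x. h (x, 0))"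
      using h rF unfolding dual_le_def sum_le_def by auto
    ultimately show ?thesis using a unfolding is_dual_abs_def by blast
  qed
  moreover have "h (0, y) \<ge> 0" if "leF 0 y" for y
    using h that rE bl_zero[OF f] unfolding dual_le_def sum_le_def by fastforce
  ultimately show "dual_le (sum_le leE leF) (\<lambda>p. a (fst p)) h"
    unfolding dual_le_def sum_le_def using bl_split[of h] h
    by (smt (verit) fst_zero prod.collapse snd_zero)
qed

lemma lift_abs_snd:
  assumes f: "bounded_linear f" and a: "is_dual_abs leF f a" and rE: "leE 0 0" and rF: "leF 0 0"
  shows "is_dual_abs (sum_le leE leF) (\<lambda>p. f (snd p)) (\<lambda>p. a (snd p))"
  unfolding is_dual_abs_def
proof (intro conjI allI impI)
  show "bounded_linear (\<lambda>p. a (snd p))" using a bl_snd unfolding is_dual_abs_def by blast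
  show "dual_le (sum_le leE leF) (\<lambda>p. f (snd p)) (\<lambda>p. a (snd p))"
    using a unfolding is_dual_abs_def dual_le_def sum_le_def by auto
  show "dual_le (sum_le leE leF) (\<lambda>x. - f (snd x)) (\<lambda>p. a (snd p))"
    using a unfolding is_dual_abs_def dual_le_def sum_le_def by auto
  fix h :: "_ \<Rightarrow> real"
  assume h: "bounded_linear h \<and> dual_le (sum_le leE leF) (\<lambda>p. f (snd p)) h \<and>
        dual_le (sum_le leE leF) (\<lambda>x. - f (snd x)) h"
  have "dual_le leF a (\<lambda>y. h (0, y))"
  proof -
    have "bounded_linear (\<lambda>y. h (0, y))" using h bl_inr by blast
    moreover have "dual_le leF f (\<lambda>y. h (0, y))" "dual_le leF (\<lambda>x. - f x) (\<lambda>y. h (0, y))"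
      using h rE unfolding dual_le_def sum_le_def by auto
    ultimately show ?thesis using a unfolding is_dual_abs_def by blast
  qed
  moreover have "h (x, 0) \<ge> 0" if "leE 0 x" for x
    using h that rF bl_zero[OF f] unfolding dual_le_def sum_le_def by fastforce
  ultimately show "dual_le (sum_le leE leF) (\<lambda>p. a (snd p)) h"
    unfolding dual_le_def sum_le_def using bl_split[of h] h
    by (smt (verit) fst_zero prod.collapse snd_zero)
qed

lemma abs_bl: "is_dual_abs le f a \<Longrightarrow> bounded_linear a"
  unfolding is_dual_abs_def by blast

lemma lift_disj_fst:
  assumes f: "bounded_linear f" and g: "bounded_linear g" and d: "dual_disjoint leE f g"
    and rE: "leE 0 0" and rF: "leF 0 0"
  shows "dual_disjoint (sum_le leE leF) (\<lambda>p. f (fst p)) (\<lambda>p. g (fst p))"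
proof -
  obtain a b where a: "is_dual_abs leE f a" and b: "is_dual_abs leE g b"
    and m: "\<And>h. bounded_linear h \<and> dual_le leE h a \<and> dual_le leE h b \<Longrightarrow> dual_le leE h (\<lambda>x. 0)"
    using d unfolding dual_disjoint_def by blast
  show ?thesis unfolding dual_disjoint_def
  proof (intro exI conjI allI impI)
    show "is_dual_abs (sum_le leE leF) (\<lambda>p. f (fst p)) (\<lambda>p. a (fst p))"
      using lift_abs_fst[where f=f and a=a and leE=leE and leF=leF] f a rE rF by blast
    show "is_dual_abs (sum_le leE leF) (\<lambda>p. g (fst p)) (\<lambda>p. b (fst p))"
      using lift_abs_fst[where f=g and a=b and leE=leE and leF=leF] g b rE rF by blast
    fix h :: "_ \<Rightarrow> real"
    assume h: "bounded_linear h \<and> dual_le (sum_le leE leF) h (\<lambda>p. a (fst p)) \<and>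
        dual_le (sum_le leE leF) h (\<lambda>p. b (fst p))"
    have "dual_le leE (\<lambda>x. h (x, 0)) (\<lambda>x. 0)"
      apply (rule m)
      using h bl_inl rF unfolding dual_le_def sum_le_def by auto
    moreover have "h (0, y) \<le> 0" if "leF 0 y" for y
      using h that rE bl_zero[OF abs_bl[OF a]] unfolding dual_le_def sum_le_def by fastforce
    ultimately show "dual_le (sum_le leE leF) h (\<lambda>x. 0)"
      unfolding dual_le_def sum_le_def using bl_split[of h] h
      by (smt (verit) fst_zero prod.collapse snd_zero)
  qed
qed

lemma lift_disj_snd:
  assumes f: "bounded_linear f" and g: "bounded_linear g" and d: "dual_disjoint leF f g"
    and rE: "leE 0 0" and rF: "leF 0 0"
  shows "dual_disjoint (sum_le leE leF) (\<lambda>p. f (snd p)) (\<lambda>p. g (snd p))"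
proof -
  obtain a b where a: "is_dual_abs leF f a" and b: "is_dual_abs leF g b"
    and m: "\<And>h. bounded_linear h \<and> dual_le leF h a \<and> dual_le leF h b \<Longrightarrow> dual_le leF h (\<lambda>x. 0)"
    using d unfolding dual_disjoint_def by blast
  show ?thesis unfolding dual_disjoint_def
  proof (intro exI conjI allI impI)
    show "is_dual_abs (sum_le leE leF) (\<lambda>p. f (snd p)) (\<lambda>p. a (snd p))"
      using lift_abs_snd[where f=f and a=a and leE=leE and leF=leF] f a rE rF by blast
    show "is_dual_abs (sum_le leE leF) (\<lambda>p. g (snd p)) (\<lambda>p. b (snd p))"
      using lift_abs_snd[where f=g and a=b and leE=leE and leF=leF] g b rE rF by blast
    fix h :: "_ \<Rightarrow> real"
    assume h: "bounded_linear h \<and> dual_le (sum_le leE leF) h (\<lambda>p. a (snd p)) \<and>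
        dual_le (sum_le leE leF) h (\<lambda>p. b (snd p))"
    have "dual_le leF (\<lambda>y. h (0, y)) (\<lambda>x. 0)"
      apply (rule m)
      using h bl_inr rE unfolding dual_le_def sum_le_def by auto
    moreover have "h (x, 0) \<le> 0" if "leE 0 x" for x
      using h that rF bl_zero[OF abs_bl[OF a]] unfolding dual_le_def sum_le_def by fastforce
    ultimately show "dual_le (sum_le leE leF) h (\<lambda>x. 0)"
      unfolding dual_le_def sum_le_def using bl_split[of h] h
      by (smt (verit) fst_zero prod.collapse snd_zero)
  qed
qed

lemma restr_abs_fst:
  assumes g: "bounded_linear g" and a: "is_dual_abs (sum_le leE leF) g a"
    and rE: "leE 0 0" and rF: "leF 0 0"
  shows "is_dual_abs leE (\<lambda>x. g (x, 0)) (\<lambda>x. a (x, 0))"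
  unfolding is_dual_abs_def
proof (intro conjI allI impI)
  have ba: "bounded_linear a" using abs_bl[OF a] .
  show "bounded_linear (\<lambda>x. a (x, 0))" using bl_inl[OF ba] .
  have a1: "\<And>x y. leE 0 x \<Longrightarrow> leF 0 y \<Longrightarrow> g (x, y) \<le> a (x, y)"
   and a2: "\<And>x y. leE 0 x \<Longrightarrow> leF 0 y \<Longrightarrow> - g (x, y) \<le> a (x, y)"
    using a unfolding is_dual_abs_def dual_le_def sum_le_def by auto
  show "dual_le leE (\<lambda>x. g (x, 0)) (\<lambda>x. a (x, 0))"
    using a1 rF unfolding dual_le_def by auto
  show "dual_le leE (\<lambda>x. - g (x, 0)) (\<lambda>x. a (x, 0))"
    using a2 rF unfolding dual_le_def by auto
  fix h :: "_ \<Rightarrow> real"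
  assume h: "bounded_linear h \<and> dual_le leE (\<lambda>x. g (x, 0)) h \<and> dual_le leE (\<lambda>x. - g (x, 0)) h"
  define h' where "h' = (\<lambda>p. h (fst p) + a (0, snd p))"
  have "bounded_linear h'" unfolding h'_def
    using h bl_fst bl_snd bl_inr[OF ba] bounded_linear_add by blast
  moreover have "dual_le (sum_le leE leF) g h'" "dual_le (sum_le leE leF) (\<lambda>x. - g x) h'"
    unfolding dual_le_def sum_le_def h'_def
  proof (safe)
    fix p :: "'a \<times> 'b" assume p: "leE (fst 0) (fst p)" "leF (snd 0) (snd p)"
    obtain x y where xy: "p = (x, y)" by fastforce
    have "leE 0 x" "leF 0 y" using p xy by auto
    then have "g (x, 0) \<le> h x" "- g (x, 0) \<le> h x" "g (0, y) \<le> a (0, y)" "- g (0, y) \<le> a (0, y)"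
      using h a1[of 0 y] a2[of 0 y] rE unfolding dual_le_def by auto
    then show "g p \<le> h (fst p) + a (0, snd p)" "- g p \<le> h (fst p) + a (0, snd p)"
      using bl_split[OF g, of x y] xy by auto
  qed
  ultimately have "dual_le (sum_le leE leF) a h'" using a unfolding is_dual_abs_def by blast
  then show "dual_le leE (\<lambda>x. a (x, 0)) h"
  proof -
    have "a (0, 0) = 0" using bl_zero[OF ba] by (simp add: zero_prod_def)
    then show ?thesis using \<open>dual_le (sum_le leE leF) a h'\<close>
      unfolding dual_le_def sum_le_def h'_def using rF by fastforce
  qed
qed

lemma restr_abs_snd:
  assumes g: "bounded_linear g" and a: "is_dual_abs (sum_le leE leF) g a"
    and rE: "leE 0 0" and rF: "leF 0 0"
  shows "is_dual_abs leF (\<lambda>y. g (0, y)) (\<lambda>y. a (0, y))"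
  unfolding is_dual_abs_def
proof (intro conjI allI impI)
  have ba: "bounded_linear a" using abs_bl[OF a] .
  show "bounded_linear (\<lambda>y. a (0, y))" using bl_inr[OF ba] .
  have a1: "\<And>x y. leE 0 x \<Longrightarrow> leF 0 y \<Longrightarrow> g (x, y) \<le> a (x, y)"
   and a2: "\<And>x y. leE 0 x \<Longrightarrow> leF 0 y \<Longrightarrow> - g (x, y) \<le> a (x, y)"
    using a unfolding is_dual_abs_def dual_le_def sum_le_def by auto
  show "dual_le leF (\<lambda>y. g (0, y)) (\<lambda>y. a (0, y))"
    using a1 rE unfolding dual_le_def by auto
  show "dual_le leF (\<lambda>y. - g (0, y)) (\<lambda>y. a (0, y))"
    using a2 rE unfolding dual_le_def by auto
  fix h :: "_ \<Rightarrow> real"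
  assume h: "bounded_linear h \<and> dual_le leF (\<lambda>y. g (0, y)) h \<and> dual_le leF (\<lambda>y. - g (0, y)) h"
  define h' where "h' = (\<lambda>p. a (fst p, 0) + h (snd p))"
  have "bounded_linear h'" unfolding h'_def
    using h bl_fst bl_snd bl_inl[OF ba] bounded_linear_add by blast
  moreover have "dual_le (sum_le leE leF) g h'" "dual_le (sum_le leE leF) (\<lambda>x. - g x) h'"
    unfolding dual_le_def sum_le_def h'_def
  proof (safe)
    fix p :: "'a \<times> 'b" assume p: "leE (fst 0) (fst p)" "leF (snd 0) (snd p)"
    obtain x y where xy: "p = (x, y)" by fastforce
    have "leE 0 x" "leF 0 y" using p xy by auto
    then have "g (0, y) \<le> h y" "- g (0, y) \<le> h y" "g (x, 0) \<le> a (x, 0)" "- g (x, 0) \<le> a (x, 0)"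
      using h a1[of x 0] a2[of x 0] rF unfolding dual_le_def by auto
    then show "g p \<le> a (fst p, 0) + h (snd p)" "- g p \<le> a (fst p, 0) + h (snd p)"
      using bl_split[OF g, of x y] xy by auto
  qed
  ultimately have "dual_le (sum_le leE leF) a h'" using a unfolding is_dual_abs_def by blast
  then show "dual_le leF (\<lambda>y. a (0, y)) h"
  proof -
    have "a (0, 0) = 0" using bl_zero[OF ba] by (simp add: zero_prod_def)
    then show ?thesis using \<open>dual_le (sum_le leE leF) a h'\<close>
      unfolding dual_le_def sum_le_def h'_def using rE by fastforce
  qed
qed

lemma abs_nonneg:
  assumes a: "is_dual_abs le g a" and "le 0 z"
  shows "0 \<le> a z"
  using assms unfolding is_dual_abs_def dual_le_def
  by (smt (verit))

lemma restr_disj_fst: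
  assumes g: "bounded_linear g" and k: "bounded_linear k"
    and d: "dual_disjoint (sum_le leE leF) g k"
    and rE: "leE 0 0" and rF: "leF 0 0"
  shows "dual_disjoint leE (\<lambda>x. g (x, 0)) (\<lambda>x. k (x, 0))"
proof -
  obtain a b where a: "is_dual_abs (sum_le leE leF) g a" and b: "is_dual_abs (sum_le leE leF) k b"
    and m: "\<And>h. bounded_linear h \<and> dual_le (sum_le leE leF) h a \<and> dual_le (sum_le leE leF) h b
              \<Longrightarrow> dual_le (sum_le leE leF) h (\<lambda>x. 0)"
    using d unfolding dual_disjoint_def by blast
  have ba: "bounded_linear a" and bb: "bounded_linear b" using abs_bl a b by blast+
  show ?thesis unfolding dual_disjoint_def
  proof (intro exI conjI allI impI)
    show "is_dual_abs leE (\<lambda>x. g (x, 0)) (\<lambda>x. a (x, 0))"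
      using restr_abs_fst[where g=g and a=a and leE=leE and leF=leF] g a rE rF by blast
    show "is_dual_abs leE (\<lambda>x. k (x, 0)) (\<lambda>x. b (x, 0))"
      using restr_abs_fst[where g=k and a=b and leE=leE and leF=leF] k b rE rF by blast
    fix h :: "_ \<Rightarrow> real"
    assume h: "bounded_linear h \<and> dual_le leE h (\<lambda>x. a (x, 0)) \<and> dual_le leE h (\<lambda>x. b (x, 0))"
    have "dual_le (sum_le leE leF) (\<lambda>p. h (fst p)) (\<lambda>x. 0)"
    proof (rule m, intro conjI)
      show "bounded_linear (\<lambda>p. h (fst p))" using h bl_fst by blast
      show "dual_le (sum_le leE leF) (\<lambda>p. h (fst p)) a"
        unfolding dual_le_def
      proof (intro allI impI)
        fix p :: "'a \<times> 'b" assume p: "sum_le leE leF 0 p"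
        obtain x y where xy: "p = (x, y)" by fastforce
        have "leE 0 x" "leF 0 y" using p xy by (auto simp: sum_le_def)
        then have "h x \<le> a (x, 0)" "0 \<le> a (0, y)"
          using h abs_nonneg[OF a, of "(0, y)"] rE unfolding dual_le_def by (auto simp: sum_le_def)
        then show "h (fst p) \<le> a p" using bl_split[OF ba, of x y] xy by auto
      qed
      show "dual_le (sum_le leE leF) (\<lambda>p. h (fst p)) b"
        unfolding dual_le_def
      proof (intro allI impI)
        fix p :: "'a \<times> 'b" assume p: "sum_le leE leF 0 p"
        obtain x y where xy: "p = (x, y)" by fastforce
        have "leE 0 x" "leF 0 y" using p xy by (auto simp: sum_le_def)
        then have "h x \<le> b (x, 0)" "0 \<le> b (0, y)"
          using h abs_nonneg[OF b, of "(0, y)"] rE unfolding dual_le_def by (auto simp: sum_le_def)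
        then show "h (fst p) \<le> b p" using bl_split[OF bb, of x y] xy by auto
      qed
    qed
    then show "dual_le leE h (\<lambda>x. 0)"
      unfolding dual_le_def sum_le_def using rF by fastforce
  qed
qed

lemma restr_disj_snd:
  assumes g: "bounded_linear g" and k: "bounded_linear k"
    and d: "dual_disjoint (sum_le leE leF) g k"
    and rE: "leE 0 0" and rF: "leF 0 0"
  shows "dual_disjoint leF (\<lambda>y. g (0, y)) (\<lambda>y. k (0, y))"
proof -
  obtain a b where a: "is_dual_abs (sum_le leE leF) g a" and b: "is_dual_abs (sum_le leE leF) k b"
    and m: "\<And>h. bounded_linear h \<and> dual_le (sum_le leE leF) h a \<and> dual_le (sum_le leE leF) h b
              \<Longrightarrow> dual_le (sum_le leE leF) h (\<lambda>x. 0)"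
    using d unfolding dual_disjoint_def by blast
  have ba: "bounded_linear a" and bb: "bounded_linear b" using abs_bl a b by blast+
  show ?thesis unfolding dual_disjoint_def
  proof (intro exI conjI allI impI)
    show "is_dual_abs leF (\<lambda>y. g (0, y)) (\<lambda>y. a (0, y))"
      using restr_abs_snd[where g=g and a=a and leE=leE and leF=leF] g a rE rF by blast
    show "is_dual_abs leF (\<lambda>y. k (0, y)) (\<lambda>y. b (0, y))"
      using restr_abs_snd[where g=k and a=b and leE=leE and leF=leF] k b rE rF by blast
    fix h :: "_ \<Rightarrow> real"
    assume h: "bounded_linear h \<and> dual_le leF h (\<lambda>y. a (0, y)) \<and> dual_le leF h (\<lambda>y. b (0, y))"
    have "dual_le (sum_le leE leF) (\<lambda>p. h (snd p)) (\<lambda>x. 0)"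
    proof (rule m, intro conjI)
      show "bounded_linear (\<lambda>p. h (snd p))" using h bl_snd by blast
      show "dual_le (sum_le leE leF) (\<lambda>p. h (snd p)) a"
        unfolding dual_le_def
      proof (intro allI impI)
        fix p :: "'a \<times> 'b" assume p: "sum_le leE leF 0 p"
        obtain x y where xy: "p = (x, y)" by fastforce
        have "leE 0 x" "leF 0 y" using p xy by (auto simp: sum_le_def)
        then have "h y \<le> a (0, y)" "0 \<le> a (x, 0)"
          using h abs_nonneg[OF a, of "(x, 0)"] rF unfolding dual_le_def by (auto simp: sum_le_def)
        then show "h (snd p) \<le> a p" using bl_split[OF ba, of x y] xy by auto
      qed
      show "dual_le (sum_le leE leF) (\<lambda>p. h (snd p)) b"
        unfolding dual_le_def
      proof (intro allI impI)
        fix p :: "'a \<times> 'b" assume p: "sum_le leE leF 0 p"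
        obtain x y where xy: "p = (x, y)" by fastforce
        have "leE 0 x" "leF 0 y" using p xy by (auto simp: sum_le_def)
        then have "h y \<le> b (0, y)" "0 \<le> b (x, 0)"
          using h abs_nonneg[OF b, of "(x, 0)"] rF unfolding dual_le_def by (auto simp: sum_le_def)
        then show "h (snd p) \<le> b p" using bl_split[OF bb, of x y] xy by auto
      qed
    qed
    then show "dual_le leF h (\<lambda>x. 0)"
      unfolding dual_le_def sum_le_def using rE by fastforce
  qed
qed

lemma zero_c0_dual: "(\<lambda>x. 0) \<in> c0_dual"
  unfolding c0_dual_def by (auto intro!: exI[of _ 0])

lemma c0_weak_topspace: "topspace c0_weak = c0"
proof -
  have "\<Union>{{x\<in>c0. \<phi> x \<in> U} | \<phi> U. \<phi> \<in> c0_dual \<and> open U} = c0"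
  proof
    show "c0 \<subseteq> \<Union>{{x\<in>c0. \<phi> x \<in> U} | \<phi> U. \<phi> \<in> c0_dual \<and> open U}"
    proof
      fix x assume "x \<in> c0"
      then have "x \<in> {x\<in>c0. (\<lambda>x. 0::real) x \<in> UNIV}" by simp
      then show "x \<in> \<Union>{{x\<in>c0. \<phi> x \<in> U} | \<phi> U. \<phi> \<in> c0_dual \<and> open U}"
        using zero_c0_dual by blast
    qed
  qed auto
  then show ?thesis unfolding c0_weak_def by simp
qed

lemma phi_cont:
  assumes "\<phi> \<in> c0_dual"
  shows "continuous_map c0_weak euclideanreal \<phi>"
  unfolding continuous_map_def
proof (intro conjI allI impI)
  show "\<phi> \<in> topspace c0_weak \<rightarrow> topspace euclideanreal" by simp
  fix U :: "real set" assume "openin euclideanreal U"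
  then have "open U" by simp
  then have "{x\<in>c0. \<phi> x \<in> U} \<in> {{x\<in>c0. \<phi> x \<in> U} | \<phi> U. \<phi> \<in> c0_dual \<and> open U}"
    using assms by blast
  then have "openin c0_weak {x\<in>c0. \<phi> x \<in> U}"
    unfolding c0_weak_def by (rule topology_generated_by_Basis)
  then show "openin c0_weak {x \<in> topspace c0_weak. \<phi> x \<in> U}"
    by (simp add: c0_weak_topspace)
qed

lemma c0_add: "x \<in> c0 \<Longrightarrow> y \<in> c0 \<Longrightarrow> (\<lambda>n. x n + y n) \<in> c0"
  unfolding c0_def using tendsto_add[of x 0 sequentially y 0] by simp

lemma add_cont:
  "continuous_map (prod_topology c0_weak c0_weak) c0_weak (\<lambda>p n. fst p n + snd p n)"
proof -
  define S where "S = {{x\<in>c0. \<phi> x \<in> U} | \<phi> U. \<phi> \<in> c0_dual \<and> open U}"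
  have eq: "c0_weak = topology_generated_by S" by (simp add: c0_weak_def S_def)
  have "continuous_map (prod_topology c0_weak c0_weak) (topology_generated_by S) (\<lambda>p n. fst p n + snd p n)"
  proof (rule continuous_on_generated_topo)
    fix U assume "U \<in> S"
    then obtain \<phi> V where U: "U = {x\<in>c0. \<phi> x \<in> V}" and \<phi>: "\<phi> \<in> c0_dual" and V: "open V"
      unfolding S_def by blast
    have lin: "\<phi> (\<lambda>n. x n + y n) = \<phi> x + \<phi> y" if "x \<in> c0" "y \<in> c0" for x y
      using \<phi> that unfolding c0_dual_def by blast
    have "continuous_map (prod_topology c0_weak c0_weak) euclideanreal (\<lambda>p. \<phi> (fst p) + \<phi> (snd p))"
      by (intro continuous_map_add continuous_map_compose[OF continuous_map_fst phi_cont[OF \<phi>], unfolded o_def]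
          continuous_map_compose[OF continuous_map_snd phi_cont[OF \<phi>], unfolded o_def])
    then have "openin (prod_topology c0_weak c0_weak)
       {p \<in> topspace (prod_topology c0_weak c0_weak). \<phi> (fst p) + \<phi> (snd p) \<in> V}"
      using V by (intro openin_continuous_map_preimage) auto
    moreover have "(\<lambda>p n. fst p n + snd p n) -` U \<inter> topspace (prod_topology c0_weak c0_weak)
       = {p \<in> topspace (prod_topology c0_weak c0_weak). \<phi> (fst p) + \<phi> (snd p) \<in> V}"
      unfolding U by (auto simp: c0_weak_topspace c0_add lin)
    ultimately show "openin (prod_topology c0_weak c0_weak)
        ((\<lambda>p n. fst p n + snd p n) -` U \<inter> topspace (prod_topology c0_weak c0_weak))" by simp
  next
    have "\<Union>S = c0" using c0_weak_topspace unfolding eq by simp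
    then show "(\<lambda>p n. fst p n + snd p n) ` topspace (prod_topology c0_weak c0_weak) \<subseteq> \<Union>S"
      by (auto simp: c0_weak_topspace c0_add)
  qed
  then show ?thesis using eq by simp
qed

lemma rwc_add:
  assumes "rel_weakly_compact_c0 S1" "rel_weakly_compact_c0 S2"
    and "\<forall>z\<in>T. \<exists>u\<in>S1. \<exists>v\<in>S2. z = (\<lambda>n. u n + v n)"
  shows "rel_weakly_compact_c0 T"
proof -
  obtain K1 K2 where K: "S1 \<subseteq> K1" "compactin c0_weak K1" "S2 \<subseteq> K2" "compactin c0_weak K2"
    using assms unfolding rel_weakly_compact_c0_def by blast
  have "compactin (prod_topology c0_weak c0_weak) (K1 \<times> K2)"
    using K compactin_Times by blast
  then have "compactin c0_weak ((\<lambda>p n. fst p n + snd p n) ` (K1 \<times> K2))"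
    using image_compactin add_cont by blast
  moreover have "T \<subseteq> (\<lambda>p n. fst p n + snd p n) ` (K1 \<times> K2)"
  proof
    fix z assume "z \<in> T"
    then obtain u v where "u \<in> S1" "v \<in> S2" "z = (\<lambda>n. u n + v n)" using assms(3) by blast
    then show "z \<in> (\<lambda>p n. fst p n + snd p n) ` (K1 \<times> K2)"
      using K by (intro image_eqI[of _ _ "(u, v)"]) auto
  qed
  ultimately show ?thesis unfolding rel_weakly_compact_c0_def by blast
qed

lemma ag_fst:
  fixes leE :: "'a::banach \<Rightarrow> 'a \<Rightarrow> bool" and leF :: "'b::banach \<Rightarrow> 'b \<Rightarrow> bool"
  assumes "almost_grothendieck (sum_le leE leF) C" and rE: "leE 0 0" and rF: "leF 0 0"
  shows "almost_grothendieck leE (fst ` C)"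
  unfolding almost_grothendieck_def
proof (intro allI impI)
  fix f :: "nat \<Rightarrow> 'a \<Rightarrow> real"
  assume f: "(\<forall>n. bounded_linear (f n)) \<and> (\<forall>x. (\<lambda>n. f n x) \<longlonglongrightarrow> 0) \<and>
        (\<forall>m n. m \<noteq> n \<longrightarrow> dual_disjoint leE (f m) (f n))"
  define g :: "nat \<Rightarrow> 'a \<times> 'b \<Rightarrow> real" where "g = (\<lambda>n p. f n (fst p))"
  have "(\<forall>n. bounded_linear (g n)) \<and> (\<forall>x. (\<lambda>n. g n x) \<longlonglongrightarrow> 0) \<and>
        (\<forall>m n. m \<noteq> n \<longrightarrow> dual_disjoint (sum_le leE leF) (g m) (g n))"
    unfolding g_def using f bl_fst lift_disj_fst[where leE=leE and leF=leF] rE rF by blast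
  then have "rel_weakly_compact_c0 ((\<lambda>x n. g n x) ` C)"
    using assms(1) unfolding almost_grothendieck_def by blast
  moreover have "(\<lambda>x n. g n x) ` C = (\<lambda>x n. f n x) ` fst ` C"
    unfolding g_def by (simp add: image_image)
  ultimately show "rel_weakly_compact_c0 ((\<lambda>x n. f n x) ` fst ` C)" by simp
qed

lemma ag_snd:
  fixes leE :: "'a::banach \<Rightarrow> 'a \<Rightarrow> bool" and leF :: "'b::banach \<Rightarrow> 'b \<Rightarrow> bool"
  assumes "almost_grothendieck (sum_le leE leF) C" and rE: "leE 0 0" and rF: "leF 0 0"
  shows "almost_grothendieck leF (snd ` C)"
  unfolding almost_grothendieck_def
proof (intro allI impI)
  fix f :: "nat \<Rightarrow> 'b \<Rightarrow> real"
  assume f: "(\<forall>n. bounded_linear (f n)) \<and> (\<forall>x. (\<lambda>n. f n x) \<longlonglongrightarrow> 0) \<and>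
        (\<forall>m n. m \<noteq> n \<longrightarrow> dual_disjoint leF (f m) (f n))"
  define g :: "nat \<Rightarrow> 'a \<times> 'b \<Rightarrow> real" where "g = (\<lambda>n p. f n (snd p))"
  have "(\<forall>n. bounded_linear (g n)) \<and> (\<forall>x. (\<lambda>n. g n x) \<longlonglongrightarrow> 0) \<and>
        (\<forall>m n. m \<noteq> n \<longrightarrow> dual_disjoint (sum_le leE leF) (g m) (g n))"
    unfolding g_def using f bl_snd lift_disj_snd[where leE=leE and leF=leF] rE rF by blast
  then have "rel_weakly_compact_c0 ((\<lambda>x n. g n x) ` C)"
    using assms(1) unfolding almost_grothendieck_def by blast
  moreover have "(\<lambda>x n. g n x) ` C = (\<lambda>x n. f n x) ` snd ` C"
    unfolding g_def by (simp add: image_image)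
  ultimately show "rel_weakly_compact_c0 ((\<lambda>x n. f n x) ` snd ` C)" by simp
qed

lemma ag_prod:
  fixes leE :: "'a::banach \<Rightarrow> 'a \<Rightarrow> bool" and leF :: "'b::banach \<Rightarrow> 'b \<Rightarrow> bool"
  assumes AE: "almost_grothendieck leE A" and BF: "almost_grothendieck leF B"
    and rE: "leE 0 0" and rF: "leF 0 0"
  shows "almost_grothendieck (sum_le leE leF) (A \<times> B)"
  unfolding almost_grothendieck_def
proof (intro allI impI)
  fix g :: "nat \<Rightarrow> 'a \<times> 'b \<Rightarrow> real"
  assume g: "(\<forall>n. bounded_linear (g n)) \<and> (\<forall>x. (\<lambda>n. g n x) \<longlonglongrightarrow> 0) \<and>
        (\<forall>m n. m \<noteq> n \<longrightarrow> dual_disjoint (sum_le leE leF) (g m) (g n))"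
  define f :: "nat \<Rightarrow> 'a \<Rightarrow> real" where "f = (\<lambda>n x. g n (x, 0))"
  define k :: "nat \<Rightarrow> 'b \<Rightarrow> real" where "k = (\<lambda>n y. g n (0, y))"
  have "(\<forall>n. bounded_linear (f n)) \<and> (\<forall>x. (\<lambda>n. f n x) \<longlonglongrightarrow> 0) \<and>
        (\<forall>m n. m \<noteq> n \<longrightarrow> dual_disjoint leE (f m) (f n))"
    unfolding f_def using g bl_inl restr_disj_fst[where leE=leE and leF=leF] rE rF by blast
  then have 1: "rel_weakly_compact_c0 ((\<lambda>x n. f n x) ` A)"
    using AE unfolding almost_grothendieck_def by blast
  have "(\<forall>n. bounded_linear (k n)) \<and> (\<forall>x. (\<lambda>n. k n x) \<longlonglongrightarrow> 0) \<and>
        (\<forall>m n. m \<noteq> n \<longrightarrow> dual_disjoint leF (k m) (k n))"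
    unfolding k_def using g bl_inr restr_disj_snd[where leE=leE and leF=leF] rE rF by blast
  then have 2: "rel_weakly_compact_c0 ((\<lambda>x n. k n x) ` B)"
    using BF unfolding almost_grothendieck_def by blast
  show "rel_weakly_compact_c0 ((\<lambda>x n. g n x) ` (A \<times> B))"
  proof (rule rwc_add[OF 1 2], intro ballI)
    fix z assume "z \<in> (\<lambda>x n. g n x) ` (A \<times> B)"
    then obtain a b where ab: "a \<in> A" "b \<in> B" "z = (\<lambda>n. g n (a, b))" by blast
    have "z = (\<lambda>n. f n a + k n b)"
      unfolding ab f_def k_def using g bl_split by blast
    note zeq = this
    have m1: "(\<lambda>n. f n a) \<in> (\<lambda>x n. f n x) ` A" and m2: "(\<lambda>n. k n b) \<in> (\<lambda>x n. k n x) ` B"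
      using ab by auto
    have e: "\<exists>v\<in>(\<lambda>x n. k n x) ` B. z = (\<lambda>n. f n a + v n)"
      apply (rule bexI[where x="\<lambda>n. k n b"])
      apply (rule zeq)
      apply (rule m2)
      done
    show "\<exists>u\<in>(\<lambda>x n. f n x) ` A. \<exists>v\<in>(\<lambda>x n. k n x) ` B. z = (\<lambda>n. u n + v n)"
      apply (rule bexI[where x="\<lambda>n. f n a"])
      apply (rule e)
      apply (rule m1)
      done
  qed
qed

theorem mainTheorem7:
  fixes leE :: "'a::banach \<Rightarrow> 'a \<Rightarrow> bool" and leF :: "'b::banach \<Rightarrow> 'b \<Rightarrow> bool"
  assumes "banach_lattice leE" and "banach_lattice leF"
  shows "(\<forall>(A::'a set) (B::'b set). A \<noteq> {} \<longrightarrow> B \<noteq> {} \<longrightarrow>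
            ((almost_grothendieck leE A \<and> almost_grothendieck leF B) \<longleftrightarrow>
             almost_grothendieck (sum_le leE leF) (A \<times> B)))
       \<and> (\<forall>C :: ('a \<times> 'b) set. almost_grothendieck (sum_le leE leF) C \<longrightarrow>
            almost_grothendieck leE (fst ` C) \<and> almost_grothendieck leF (snd ` C))"
proof -
  have rE: "leE 0 0" using assms(1) unfolding banach_lattice_def by blast
  have rF: "leF 0 0" using assms(2) unfolding banach_lattice_def by blast
  have P1: "(almost_grothendieck leE A \<and> almost_grothendieck leF B) \<longleftrightarrow>
             almost_grothendieck (sum_le leE leF) (A \<times> B)"
    if ne: "A \<noteq> {}" "B \<noteq> {}" for A :: "'a set" and B :: "'b set"
  proof
    assume "almost_grothendieck leE A \<and> almost_grothendieck leF B"
    then show "almost_grothendieck (sum_le leE leF) (A \<times> B)"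
      using ag_prod rE rF by blast
  next
    assume h: "almost_grothendieck (sum_le leE leF) (A \<times> B)"
    have "almost_grothendieck leE (fst ` (A \<times> B))" "almost_grothendieck leF (snd ` (A \<times> B))"
      using ag_fst[OF h rE rF] ag_snd[OF h rE rF] by auto
    then show "almost_grothendieck leE A \<and> almost_grothendieck leF B"
      using ne by simp
  qed
  have P2: "almost_grothendieck leE (fst ` C) \<and> almost_grothendieck leF (snd ` C)"
    if h: "almost_grothendieck (sum_le leE leF) C" for C :: "('a \<times> 'b) set"
    using ag_fst[OF h rE rF] ag_snd[OF h rE rF] by blast
  show ?thesis using P1 P2 by blast
qed

end
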